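(* Let $M\ge1$ and $0\le j<M$. Let $\mathbf k^j=(k^j_0,\dots,k^j_{M-1})$ satisfy $k^j_i=\infty$ for $i<j$, with $k^j_j\le k^j_{j+1}\le\dots\le k^j_{M-1}$ positive integers. Define $\mathbf k^{j+1}$ by $$k^{j+1}_i=\begin{cases}k^j_i-\left\lceil k^j_i/k^j_j\right\rceil, & i>j,\\ \infty, & i\le j.\end{cases}$$ If $\mathbf k^{j+1}$ is schedulable, then $\mathbf k^j$ is schedulable. Moreover, there exists a schedule satisfying $\mathbf k^j$ in which task $v_j$ is scheduled exactly every $k^j_j$ slots.
   Context: Pinwheel scheduling: given a vector $\mathbf k=(k_0,\dots,k_{M-1})$ with entries in $\mathbb Z_{>0}\cup\{\infty\}$, a schedule is an assignment of at most one task from $\{v_0,\dots,v_{M-1}\}$ to each time slot. The schedule satisfies $\mathbf k$ if, for every $i$ with $k_i<\infty$, the gap between consecutive occurrences of $v_i$ (and the time until its first occurrence) is at most $k_i$. Equivalently, every window of $k_i$ consecutive slots contains $v_i$. An entry $k_i=\infty$ means task $v_i$ is absent and imposes no constraint. The vector $\mathbf k$ is schedulable if such a schedule exists. *)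

theory Defs
  imports Complex_Main "HOL-Library.Extended_Nat"
begin

text \<open>A pinwheel instance with M tasks v_0..v_{M-1} is a vector k :: nat => enat
  (only the entries i < M matter); infinity means the task is absent.\<close>

definition is_schedule :: "nat \<Rightarrow> (nat \<Rightarrow> nat option) \<Rightarrow> bool" where
  "is_schedule M s \<longleftrightarrow> (\<forall>t i. s t = Some i \<longrightarrow> i < M)"

definition satisfies :: "nat \<Rightarrow> (nat \<Rightarrow> enat) \<Rightarrow> (nat \<Rightarrow> nat option) \<Rightarrow> bool" where
  "satisfies M k s \<longleftrightarrow> is_schedule M s \<and>
     (\<forall>i<M. \<forall>n. k i = enat n \<longrightarrow> (\<forall>t. \<exists>u. t \<le> u \<and> u < t + n \<and> s u = Some i))"

definition schedulable :: "nat \<Rightarrow> (nat \<Rightarrow> enat) \<Rightarrow> bool" where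
  "schedulable M k \<longleftrightarrow> (\<exists>s. satisfies M k s)"

definition reduce :: "nat \<Rightarrow> (nat \<Rightarrow> enat) \<Rightarrow> nat \<Rightarrow> enat" where
  "reduce j k i = (if j < i then
      enat (the_enat (k i) - nat \<lceil>real (the_enat (k i)) / real (the_enat (k j))\<rceil>)
    else \<infinity>)"

end

theory Submission imports Defs begin

lemma psi_decomp:
  fixes m p :: nat assumes "p \<ge> 2"
  shows "m + m div (p-1) = (m div (p-1)) * p + m mod (p-1)"
proof -
  have "m = (m div (p-1)) * (p-1) + m mod (p-1)" by (rule div_mult_mod_eq[symmetric])
  then have "m + m div (p-1) = (m div (p-1)) * (p-1) + m div (p-1) + m mod (p-1)" by linarith
  also have "(m div (p-1)) * (p-1) + m div (p-1) = (m div (p-1)) * p"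
    using assms by (cases p) (auto simp: algebra_simps)
  finally show ?thesis .
qed

lemma psi_div:
  fixes m p :: nat assumes "p \<ge> 2"
  shows "(m + m div (p-1)) div p = m div (p-1)" and "(m + m div (p-1)) mod p = m mod (p-1)"
proof -
  have b0: "m mod (p-1) < p - 1" using assms by simp
  then have b: "m mod (p-1) < p" by linarith
  show "(m + m div (p-1)) div p = m div (p-1)" unfolding psi_decomp[OF assms]
    using b by simp
  show "(m + m div (p-1)) mod p = m mod (p-1)" unfolding psi_decomp[OF assms]
    using b by simp
qed

lemma psi_ge:
  fixes t p :: nat assumes "p \<ge> 2"
  shows "t \<le> (t - t div p) + (t - t div p) div (p-1)"
proof -
  define q r where "q = t div p" and "r = t mod p"
  have t: "t = q*p + r" by (simp add: q_def r_def)
  have r: "r < p" using assms r_def by simp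
  have qq: "q*(p-1) + q = q*p" using assms by (cases p) (auto simp: algebra_simps)
  have m0: "t - t div p = q*(p-1) + r" using t qq unfolding q_def[symmetric] by linarith
  moreover have "q \<le> (q*(p-1) + r) div (p-1)"
  proof -
    have "q = (q*(p-1)) div (p-1)" using assms by simp
    also have "... \<le> (q*(p-1) + r) div (p-1)" by (rule div_le_mono) simp
    finally show ?thesis .
  qed
  ultimately show ?thesis unfolding m0 using t qq by linarith
qed


lemma psi_lt:
  fixes m x p :: nat assumes p: "p \<ge> 2" and m: "m < x - x div p"
  shows "m + m div (p-1) < x"
proof -
  define Q R where "Q = x div p" and "R = x mod p"
  have x: "x = Q*p + R" by (simp add: Q_def R_def)
  have R: "R < p" using p R_def by simp
  have qq: "Q*(p-1) + Q = Q*p" using p by (cases p) (auto simp: algebra_simps)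
  have x0: "x - x div p = Q*(p-1) + R" using x qq unfolding Q_def[symmetric] by linarith
  define a b where "a = m div (p-1)" and "b = m mod (p-1)"
  have mm: "m = a*(p-1) + b" unfolding a_def b_def by (rule div_mult_mod_eq[symmetric])
  have b: "b < p - 1" unfolding b_def using p by simp
  have psi: "m + m div (p-1) = a*p + b" unfolding a_def b_def by (rule psi_decomp[OF p])
  have "a \<le> Q"
  proof (rule ccontr)
    assume "\<not> a \<le> Q"
    then have "Q + 1 \<le> a" by simp
    then have "(Q+1)*(p-1) \<le> a*(p-1)" by (rule mult_right_mono) simp
    moreover have "(Q+1)*(p-1) = Q*(p-1) + (p-1)" by (simp add: distrib_right)
    ultimately have "Q*(p-1) + (p-1) \<le> m" using mm by linarith
    then show False using m x0 R by linarith
  qed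
  then consider "a < Q" | "a = Q" by linarith
  then show ?thesis
  proof cases
    case 1
    then have "a + 1 \<le> Q" by simp
    then have "(a+1)*p \<le> Q*p" by (rule mult_right_mono) simp
    then show ?thesis using psi b x by (simp add: algebra_simps)
  next
    case 2
    then have "m = Q*(p-1) + b" using mm by simp
    then have "b < R" using m x0 by linarith
    then show ?thesis using psi 2 x by simp
  qed
qed

lemma div_sum_le:
  fixes t n p C :: nat assumes "n \<le> p*C" and "p > 0"
  shows "(t+n) div p \<le> t div p + C"
proof -
  have "(t+n) div p \<le> (t + C*p) div p" using assms by (intro div_le_mono) (simp add: mult.commute)
  also have "... = t div p + C" using assms by simp
  finally show ?thesis .
qed

lemma ceil_bound:
  fixes n p :: nat assumes "p > 0"
  shows "n \<le> p * nat \<lceil>real n / real p\<rceil>"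
proof -
  have "real n / real p \<le> real_of_int \<lceil>real n / real p\<rceil>" by (rule le_of_int_ceiling)
  then have "real n / real p * real p \<le> real_of_int \<lceil>real n / real p\<rceil> * real p"
    by (rule mult_right_mono) simp
  moreover have "real n / real p * real p = real n" using assms by simp
  ultimately have "real n \<le> real p * real_of_int \<lceil>real n / real p\<rceil>" by (simp add: mult.commute)
  moreover have h0: "0 \<le> real n / real p" by simp
  moreover have "\<lceil>real n / real p\<rceil> \<ge> 0" using h0 by (simp, linarith)
  ultimately have "real n \<le> real (p * nat \<lceil>real n / real p\<rceil>)" by simp
  then show ?thesis by linarith
qed

theorem lemma4:
  fixes M j :: nat and k :: "nat \<Rightarrow> enat"
  assumes "M \<ge> 1" and "j < M"
    and "\<forall>i<j. k i = \<infinity>"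
    and "\<forall>i. j \<le> i \<and> i < M \<longrightarrow> k i \<noteq> \<infinity> \<and> k i > 0"
    and "\<forall>i i'. j \<le> i \<and> i \<le> i' \<and> i' < M \<longrightarrow> k i \<le> k i'"
    and "schedulable M (reduce j k)"
  shows "schedulable M k \<and>
    (\<exists>s. satisfies M k s \<and>
       (\<exists>c < the_enat (k j). \<forall>t. s t = Some j \<longleftrightarrow> t mod the_enat (k j) = c))"
proof -
  define p where "p = the_enat (k j)"
  have kj: "k j = enat p" using assms(2,4) unfolding p_def by auto
  have p0: "p > 0" using assms(2,4) kj by (metis enat_0_iff(1) less_irrefl neq0_conv order_refl zero_enat_def)
  obtain s' where s': "satisfies M (reduce j k) s'" using assms(6) unfolding schedulable_def by blast
  define s where "s u = (if u mod p = p-1 then Some j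
      else if s' (u - u div p) = Some j then None else s' (u - u div p))" for u
  have sj: "s t = Some j \<longleftrightarrow> t mod p = p - 1" for t unfolding s_def by auto
  have sched: "is_schedule M s"
    using s' assms(2) unfolding is_schedule_def satisfies_def s_def by auto
  have win: "\<exists>u. t \<le> u \<and> u < t + n \<and> s u = Some i"
    if i: "i < M" and ki: "k i = enat n" for i n t
  proof -
    consider "i < j" | "i = j" | "j < i" by linarith
    then show ?thesis
    proof cases
      case 1 then show ?thesis using assms(3) ki by simp
    next
      case 2
      then have n: "n = p" using ki kj by simp
      define u where "u = t div p * p + (p - 1)"
      have "t div p * p + t mod p = t" by simp
      moreover have "t mod p < p" using p0 by simp
      ultimately have "t \<le> u \<and> u < t + n" unfolding u_def n by linarith
      moreover have "u mod p = p - 1" unfolding u_def mod_mult_self3 using p0 by simp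
      ultimately show ?thesis using sj 2 by blast
    next
      case 3
      define C where "C = nat \<lceil>real n / real p\<rceil>"
      have red: "reduce j k i = enat (n - C)" by (simp only: reduce_def if_P[OF 3] ki kj the_enat.simps C_def)
      define t0 where "t0 = t - t div p"
      obtain m where m: "t0 \<le> m" "m < t0 + (n - C)" "s' m = Some i"
        using s' i red unfolding satisfies_def by blast
      have p2: "p \<ge> 2"
      proof (rule ccontr)
        assume "\<not> p \<ge> 2"
        then have "p = 1" using p0 by simp
        then have "C = n" unfolding C_def by simp
        then show False using m by simp
      qed
      define u where "u = m + m div (p-1)"
      have "t \<le> t0 + t0 div (p-1)" unfolding t0_def by (rule psi_ge[OF p2])
      also have "... \<le> u" unfolding u_def using m(1) by (intro add_mono div_le_mono)
      finally have tu: "t \<le> u" .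
      have "n \<le> p * C" unfolding C_def by (rule ceil_bound[OF p0])
      then have "(t+n) div p \<le> t div p + C" by (rule div_sum_le[OF _ p0])
      moreover have "t div p \<le> t" by simp
      moreover have "C < n" using m by linarith
      ultimately have "m < (t+n) - (t+n) div p" using m unfolding t0_def by linarith
      then have un: "u < t + n" unfolding u_def by (rule psi_lt[OF p2])
      have "u mod p = m mod (p-1)" unfolding u_def by (rule psi_div(2)[OF p2])
      moreover have "m mod (p-1) < p - 1" using p2 by simp
      ultimately have um: "u mod p \<noteq> p - 1" by simp
      have "u div p = m div (p-1)" unfolding u_def by (rule psi_div(1)[OF p2])
      then have "u - u div p = m" unfolding u_def by simp
      then have "s u = Some i" unfolding s_def using um m(3) 3 by simp
      then show ?thesis using tu un by blast
    qed
  qed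
  have sat: "satisfies M k s" unfolding satisfies_def using sched win by blast
  have "\<exists>c < the_enat (k j). \<forall>t. s t = Some j \<longleftrightarrow> t mod the_enat (k j) = c"
    unfolding p_def[symmetric] using sj p0 by (intro exI[of _ "p - 1"]) auto
  then show ?thesis using sat unfolding schedulable_def by blast
qed

end
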